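(* Let $F:S_N\times\mathbb{R}^N\times\mathbb{R}\to\mathbb{R}$ (independent of $x$) satisfy (H0), (H1) and (H3), and let $l:\mathbb{R}^N\to S_N$ be a linear map. Then the function $g:\mathbb{R}^N\to\mathbb{R}$, $g(p)=F\big(l(p)+p\otimes p,\ p,\ 1\big)$, is convex.
   Context: $S_N$ is the space of real symmetric $N\times N$ matrices and $p\otimes p$ is the matrix $(p_ip_j)_{i,j}$. For $0<\lambda\le\Lambda$, $\mathcal M^\pm$ are the Pucci operators ($\sup$/$\inf$ of $\mathrm{tr}(AM)$ over $A\in S_N$ with eigenvalues in $[\lambda,\Lambda]$). Hypotheses (for $x$-independent $F$): (H0) $F(sM,sp,su)=sF(M,p,u)$ for $s\ge0$; (H1) for some $\gamma,\delta\ge0$: $\mathcal M^-(M-M')-\gamma|p-q|-\delta|u-v|\le F(M,p,u)-F(M',q,v)\le\mathcal M^+(M-M')+\gamma|p-q|+\delta|u-v|$ for all arguments; (H3) with $G(M,p,u)=-F(-M,-p,-u)$: $G(M-M',p-q,u-v)\le F(M,p,u)-F(M',q,v)\le F(M-M',p-q,u-v)$. *)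

theory Defs
  imports "HOL-Analysis.Analysis"
begin

text \<open>Real symmetric N x N matrices (S_N), with N = CARD('n).\<close>
definition symmetric_mat :: "real^'n^'n \<Rightarrow> bool" where
  "symmetric_mat M \<longleftrightarrow> transpose M = M"

definition is_eigenvalue :: "real^'n^'n \<Rightarrow> real \<Rightarrow> bool" where
  "is_eigenvalue A c \<longleftrightarrow> (\<exists>v. v \<noteq> 0 \<and> A *v v = c *s v)"

definition pucci_class :: "real \<Rightarrow> real \<Rightarrow> (real^'n^'n) set" where
  "pucci_class lam Lam = {A. symmetric_mat A \<and> (\<forall>c. is_eigenvalue A c \<longrightarrow> lam \<le> c \<and> c \<le> Lam)}"

definition pucci_plus :: "real \<Rightarrow> real \<Rightarrow> real^'n^'n \<Rightarrow> real" where
  "pucci_plus lam Lam M = Sup ((\<lambda>A. trace (A ** M)) ` pucci_class lam Lam)"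

definition pucci_minus :: "real \<Rightarrow> real \<Rightarrow> real^'n^'n \<Rightarrow> real" where
  "pucci_minus lam Lam M = Inf ((\<lambda>A. trace (A ** M)) ` pucci_class lam Lam)"

definition tensor :: "real^'n \<Rightarrow> real^'n \<Rightarrow> real^'n^'n" where
  "tensor p q = (\<chi> i j. p $ i * q $ j)"

end

theory Submission
  imports Defs
begin

lemma sym_inner:
  assumes "symmetric_mat A"
  shows "inner x (A *v y) = inner y (A *v x)"
proof -
  have "inner x (A *v y) = inner (x v* A) y" by (simp add: dot_lmul_matrix)
  also have "x v* A = transpose A *v x" by simp
  also have "\<dots> = A *v x" using assms by (simp add: symmetric_mat_def)
  finally show ?thesis by (simp add: inner_commute)
qed

lemma quad_expand:
  assumes "symmetric_mat A"
  shows "inner (x + t *\<^sub>R y) (A *v (x + t *\<^sub>R y)) =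
     inner x (A *v x) + 2 * t * inner y (A *v x) + t^2 * inner y (A *v y)"
  using sym_inner[OF assms, of x y]
  by (simp add: algebra_simps inner_add_left inner_add_right power2_eq_square)

lemma rayleigh:
  fixes A :: "real^'n^'n"
  assumes sym: "symmetric_mat A" and eig: "\<And>c. is_eigenvalue A c \<Longrightarrow> 0 \<le> c"
  shows "0 \<le> inner w (A *v w)"
proof -
  define f where "f = (\<lambda>x::real^'n. inner x (A *v x))"
  have cont: "continuous_on (sphere 0 1) f" unfolding f_def
    by (intro continuous_intros linear_continuous_on matrix_vector_mul_linear) 
  have ne: "sphere (0::real^'n) 1 \<noteq> {}"
  proof -
    obtain i :: 'n where True by simp
    have "axis i (1::real) \<in> sphere 0 1" by simp
    thus ?thesis by blast
  qed
  obtain x where xs: "x \<in> sphere 0 1" and xmin: "\<And>z. z \<in> sphere 0 1 \<Longrightarrow> f x \<le> f z"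
    using continuous_attains_inf[OF compact_sphere ne cont] by blast
  define m where "m = f x"
  have nx: "norm x = 1" using xs by simp
  have lb: "m * inner z z \<le> f z" for z
  proof (cases "z = 0")
    case True thus ?thesis by (simp add: f_def)
  next
    case False
    define u where "u = (1 / norm z) *\<^sub>R z"
    have "u \<in> sphere 0 1" using False by (simp add: u_def)
    hence "m \<le> f u" using xmin m_def by simp
    also have "f u = f z / (norm z)^2" unfolding u_def f_def
      by (simp add: matrix_vector_mult_scaleR power2_eq_square)
    finally have "m * (norm z)^2 \<le> f z" using False by (simp add: field_simps)
    thus ?thesis by (simp add: power2_norm_eq_inner)
  qed
  define B where "B = A - m *\<^sub>R mat 1"
  have Bsym: "symmetric_mat B" using sym unfolding B_def symmetric_mat_def
    by (simp add: transpose_scalar transpose_def vec_eq_iff mat_def)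
  have Bv: "B *v z = A *v z - m *\<^sub>R z" for z
    by (simp add: B_def matrix_vector_mult_diff_rdistrib flip: scaleR_matrix_vector_assoc)
  have gB: "0 \<le> inner z (B *v z)" for z
    using lb[of z] by (simp add: Bv f_def inner_diff_right)
  have gx: "inner x (B *v x) = 0"
    using nx by (simp add: Bv f_def m_def inner_diff_right power2_norm_eq_inner[symmetric])
  have Bx0: "B *v x = 0"
  proof (rule ccontr)
    assume "B *v x \<noteq> 0"
    define y where "y = B *v x"
    define c where "c = inner y y"
    define d where "d = inner y (B *v y)"
    have c: "c > 0" using \<open>B *v x \<noteq> 0\<close> by (simp add: c_def y_def)
    have d: "d \<ge> 0" using gB by (simp add: d_def)
    define t where "t = - c / (d + 1)"
    have "0 \<le> inner (x + t *\<^sub>R y) (B *v (x + t *\<^sub>R y))" by (rule gB)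
    also have "\<dots> = 2 * t * c + t^2 * d"
      using quad_expand[OF Bsym, of x t y] gx by (simp add: c_def d_def y_def)
    also have "\<dots> = t * (2 * c + t * d)" by (simp add: algebra_simps power2_eq_square)
    also have "\<dots> < 0"
    proof -
      have tn: "t < 0" using c d by (simp add: t_def divide_neg_pos)
      have "t * (d + 1) = - c" using d by (simp add: t_def)
      hence "t * d = - c - t" by (simp add: algebra_simps)
      hence "2 * c + t * d > 0" using tn c by linarith
      thus ?thesis using tn by (simp add: mult_neg_pos)
    qed
    finally show False by simp
  qed
  have "A *v x = m *s x" using Bx0 by (simp add: Bv scalar_mult_eq_scaleR)
  moreover have "x \<noteq> 0" using nx by auto
  ultimately have "is_eigenvalue A m" unfolding is_eigenvalue_def by blast
  hence "0 \<le> m" by (rule eig)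
  hence "0 \<le> m * inner w w" by simp
  thus ?thesis using lb[of w] by (simp add: f_def)
qed

lemma sym_add: "symmetric_mat A \<Longrightarrow> symmetric_mat B \<Longrightarrow> symmetric_mat (A + B)"
  by (simp add: symmetric_mat_def transpose_def vec_eq_iff)
lemma sym_diff: "symmetric_mat A \<Longrightarrow> symmetric_mat B \<Longrightarrow> symmetric_mat (A - B)"
  by (simp add: symmetric_mat_def transpose_def vec_eq_iff)
lemma sym_scale: "symmetric_mat A \<Longrightarrow> symmetric_mat (c *\<^sub>R A)"
  by (simp add: symmetric_mat_def transpose_scalar)
lemma sym_neg: "symmetric_mat A \<Longrightarrow> symmetric_mat (- A)"
  by (simp add: symmetric_mat_def transpose_def vec_eq_iff)
lemma sym_zero: "symmetric_mat 0"
  by (simp add: symmetric_mat_def transpose_def vec_eq_iff)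
lemma sym_tensor: "symmetric_mat (tensor p p)"
  by (simp add: symmetric_mat_def transpose_def vec_eq_iff tensor_def)

lemma tensor_comb: "tensor ((1 - t) *\<^sub>R x + t *\<^sub>R y) ((1 - t) *\<^sub>R x + t *\<^sub>R y) =
   (1 - t) *\<^sub>R tensor x x + t *\<^sub>R tensor y y - ((1-t)*t) *\<^sub>R tensor (x - y) (x - y)"
  by (simp add: vec_eq_iff tensor_def algebra_simps)

lemma trace_tensor: "trace (A ** (- tensor w w)) = - inner w (A *v w)"
  by (simp add: trace_def matrix_matrix_mult_def tensor_def inner_vec_def
        matrix_vector_mult_def sum_distrib_left sum_negf algebra_simps)

lemma lamI_in:
  assumes "0 < lam" "lam \<le> Lam"
  shows "lam *\<^sub>R (mat 1 :: real^'a^'a) \<in> pucci_class lam Lam"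
proof -
  have "symmetric_mat (lam *\<^sub>R (mat 1 :: real^'a^'a))"
    by (simp only: symmetric_mat_def transpose_scalar transpose_mat)
  moreover have "lam \<le> c \<and> c \<le> Lam" if "is_eigenvalue (lam *\<^sub>R (mat 1 :: real^'a^'a)) c" for c
  proof -
    from that obtain v :: "real^'a" where v: "v \<noteq> 0" "(lam *\<^sub>R mat 1) *v v = c *s v"
      unfolding is_eigenvalue_def by (elim exE conjE)
    have e1: "(lam *\<^sub>R mat 1) *v v = lam *\<^sub>R v"
      by (simp only: scaleR_matrix_vector_assoc[symmetric] matrix_vector_mul_lid)
    have e2: "c *s v = c *\<^sub>R v" by (simp only: scalar_mult_eq_scaleR)
    have "lam *\<^sub>R v = c *\<^sub>R v" using v(2) unfolding e1 e2 .
    hence "(lam - c) *\<^sub>R v = 0" by (simp add: scaleR_diff_left)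
    hence "lam = c" using v(1) by simp
    thus ?thesis using assms by simp
  qed
  ultimately show ?thesis unfolding pucci_class_def mem_Collect_eq by simp
qed


lemma trace_le:
  assumes "0 < lam" and A: "A \<in> pucci_class lam Lam"
  shows "trace (A ** - tensor w w) \<le> 0"
proof -
  have As: "symmetric_mat A" and Ae: "\<And>c. is_eigenvalue A c \<Longrightarrow> lam \<le> c"
    using A unfolding pucci_class_def by auto
  have "0 \<le> inner w (A *v w)"
  proof (rule rayleigh[OF As])
    fix c assume "is_eigenvalue A c"
    from Ae[OF this] assms(1) show "0 \<le> c" by linarith
  qed
  thus ?thesis by (simp add: trace_tensor)
qed

lemma pucci_plus_neg_tensor:
  fixes w :: "real^'a"
  assumes "0 < lam" "lam \<le> Lam"
  shows "pucci_plus lam Lam (- tensor w w) \<le> 0"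
  unfolding pucci_plus_def
proof (rule cSup_least)
  show "(\<lambda>A. trace (A ** - tensor w w)) ` pucci_class lam Lam \<noteq> {}"
    using imageI[OF lamI_in[OF assms], of "\<lambda>A. trace (A ** - tensor w w)"] by (metis empty_iff)
next
  fix x assume "x \<in> (\<lambda>A. trace (A ** - tensor w w)) ` pucci_class lam Lam"
  then obtain A where A: "A \<in> pucci_class lam Lam" and x: "x = trace (A ** - tensor w w)" by blast
  show "x \<le> 0" unfolding x by (rule trace_le[OF assms(1) A])
qed

theorem mainTheorem18:
  fixes F :: "real^'n^'n \<Rightarrow> real^'n \<Rightarrow> real \<Rightarrow> real"
    and l :: "real^'n \<Rightarrow> real^'n^'n"
    and lam Lam \<gamma> \<delta> :: real
  assumes lam_pos: "0 < lam" and lam_le: "lam \<le> Lam"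
    and H0: "\<And>s M p u. 0 \<le> s \<Longrightarrow> symmetric_mat M \<Longrightarrow>
               F (s *\<^sub>R M) (s *\<^sub>R p) (s * u) = s * F M p u"
    and gamma_nonneg: "0 \<le> \<gamma>" and delta_nonneg: "0 \<le> \<delta>"
    and H1: "\<And>M M' p q u v. symmetric_mat M \<Longrightarrow> symmetric_mat M' \<Longrightarrow>
               pucci_minus lam Lam (M - M') - \<gamma> * norm (p - q) - \<delta> * \<bar>u - v\<bar>
                 \<le> F M p u - F M' q v
             \<and> F M p u - F M' q v
                 \<le> pucci_plus lam Lam (M - M') + \<gamma> * norm (p - q) + \<delta> * \<bar>u - v\<bar>"
    and H3: "\<And>M M' p q u v. symmetric_mat M \<Longrightarrow> symmetric_mat M' \<Longrightarrow>
               - F (- (M - M')) (- (p - q)) (- (u - v)) \<le> F M p u - F M' q v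
             \<and> F M p u - F M' q v \<le> F (M - M') (p - q) (u - v)"
    and l_linear: "linear l"
    and l_sym: "\<And>p. symmetric_mat (l p)"
  shows "convex_on UNIV (\<lambda>p. F (l p + tensor p p) p 1)"
proof -
  have Fsub: "F (X + Y) (a + b) (u + v) \<le> F X a u + F Y b v"
    if "symmetric_mat X" "symmetric_mat Y" for X Y a b u v
    using conjunct2[OF H3[of "X + Y" Y "a + b" b "u + v" v]] that by (simp add: sym_add)
  have F0: "F 0 0 0 = 0" using H0[of 0 0 0 0] sym_zero by simp
  have Fneg: "F (- tensor w w) 0 0 \<le> 0" for w
  proof -
    have "F (- tensor w w) 0 0 - F 0 0 0 \<le> pucci_plus lam Lam (- tensor w w - 0) + \<gamma> * norm ((0::real^'n) - 0) + \<delta> * \<bar>(0::real) - 0\<bar>"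
      using conjunct2[OF H1[OF sym_neg[OF sym_tensor] sym_zero]] .
    thus ?thesis using pucci_plus_neg_tensor[OF lam_pos lam_le, of w] F0 by simp
  qed
  show ?thesis
  proof (rule convex_onI)
    fix t :: real and x y :: "real^'n"
    assume t0: "0 < t" and t1: "t < 1"
    define z where "z = (1 - t) *\<^sub>R x + t *\<^sub>R y"
    define Mx where "Mx = l x + tensor x x"
    define My where "My = l y + tensor y y"
    define s where "s = (1 - t) * t"
    define S where "S = (1 - t) *\<^sub>R Mx + t *\<^sub>R My"
    define P where "P = s *\<^sub>R tensor (x - y) (x - y)"
    have symMx: "symmetric_mat Mx" unfolding Mx_def by (intro sym_add l_sym sym_tensor)
    have symMy: "symmetric_mat My" unfolding My_def by (intro sym_add l_sym sym_tensor)
    have symS: "symmetric_mat S" unfolding S_def by (intro sym_add sym_scale symMx symMy)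
    have symP: "symmetric_mat P" unfolding P_def by (intro sym_scale sym_tensor)
    have lz: "l z = (1 - t) *\<^sub>R l x + t *\<^sub>R l y"
      unfolding z_def by (simp only: linear_add[OF l_linear] linear_scale[OF l_linear])
    have Mz: "l z + tensor z z = S - P"
      unfolding lz unfolding S_def P_def Mx_def My_def s_def z_def tensor_comb
      by (simp add: algebra_simps)
    have s0: "0 \<le> s" using t0 t1 by (simp add: s_def)
    have "F (S - P) z 1 - F S z 1 \<le> F (S - P - S) (z - z) (1 - 1)"
      using conjunct2[OF H3[of "S - P" S z z 1 1]] symS symP by (simp add: sym_diff)
    also have "\<dots> = F (s *\<^sub>R (- tensor (x - y) (x - y))) (s *\<^sub>R 0) (s * 0)"
      by (simp add: P_def)
    also have "\<dots> = s * F (- tensor (x - y) (x - y)) 0 0"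
      by (rule H0[OF s0 sym_neg[OF sym_tensor]])
    also have "\<dots> \<le> 0" using s0 Fneg by (simp add: mult_nonneg_nonpos)
    finally have step1: "F (S - P) z 1 \<le> F S z 1" by simp
    have "F S z 1 = F ((1 - t) *\<^sub>R Mx + t *\<^sub>R My) ((1 - t) *\<^sub>R x + t *\<^sub>R y) ((1 - t) * 1 + t * 1)"
      by (simp add: S_def z_def)
    also have "\<dots> \<le> F ((1 - t) *\<^sub>R Mx) ((1 - t) *\<^sub>R x) ((1 - t) * 1) + F (t *\<^sub>R My) (t *\<^sub>R y) (t * 1)"
      by (intro Fsub sym_scale symMx symMy)
    also have "\<dots> = (1 - t) * F Mx x 1 + t * F My y 1"
      using H0[of "1 - t" Mx x 1] H0[of t My y 1] t0 t1 symMx symMy by simp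
    finally have step2: "F S z 1 \<le> (1 - t) * F Mx x 1 + t * F My y 1" .
    show "F (l ((1 - t) *\<^sub>R x + t *\<^sub>R y) + tensor ((1 - t) *\<^sub>R x + t *\<^sub>R y) ((1 - t) *\<^sub>R x + t *\<^sub>R y))
            ((1 - t) *\<^sub>R x + t *\<^sub>R y) 1
          \<le> (1 - t) * F (l x + tensor x x) x 1 + t * F (l y + tensor y y) y 1"
      using step1 step2 Mz unfolding z_def Mx_def My_def by simp
  qed simp
qed

end
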